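(* Assume (with $T>0$) that there is $K_0>0$ with $\mathbb{E}[|\mathcal{H}(\mathcal{T}_{t,c})|]\le K_0$ for all $c\in\mathcal{C}$, $t\in[0,T]$, and set $y_c(t):=\mathbb{E}[\mathcal{H}(\mathcal{T}_{t,c})]$. Then the family $(y_c)_{c\in\mathcal{C}}$ satisfies $$y_c(t)=c(y)(0)+\sum_{Z\in\mathcal{M}(c)}\int_0^t\prod_{z\in Z}y_z(s)\,ds,\qquad t\in[0,T],\ c\in\mathcal{C}.$$ In particular $y_{{\rm Id}_i}(t)=y_i(0)+\int_0^t y_{f_i^*}(s)\,ds$ and, for $c=g^*$, $y_{g^*}(t)=g(y(0))+\sum_{j=1}^d\int_0^t y_{f_j^*}(s)\,y_{(\partial_jg)^*}(s)\,ds$.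
   Context: Let $d\ge1$ and let $f=(f_1,\ldots,f_d):\mathbb{R}^d\to\mathbb{R}^d$ with each $f_i$ smooth ($C^\infty$) and Lipschitz; $y(0)\in\mathbb{R}^d$ is a fixed initial condition. Write $\partial_j=\partial/\partial y_j$. For $g:\mathbb{R}^d\to\mathbb{R}$, $g^*$ sends a path $y:\mathbb{R}_+\to\mathbb{R}^d$ to $t\mapsto g(y(t))$; ${\rm Id}_i$ sends $y\mapsto y_i$. Codes: $\mathcal{C}=\{{\rm Id}_i:1\le i\le d\}\cup\{(\partial_1^{i_1}\cdots\partial_d^{i_d}f_i)^*: i_1,\ldots,i_d\ge0,\ 1\le i\le d\}$ (formal symbols). Mechanism: $\mathcal{M}({\rm Id}_i)=\{(f_i^* )\}$ and $\mathcal{M}(g^* )=\{(f_1^*,(\partial_1g)^* ),\ldots,(f_d^*,(\partial_dg)^* )\}$. The value $c(y)(0)$ only depends on $y(0)$: it is $y_i(0)$ if $c={\rm Id}_i$ and $g(y(0))$ if $c=g^*$. Random coding tree: fix a probability density $\rho:\mathbb{R}_+\to(0,\infty)$ with tail $\bar F(t)=\int_t^\infty\rho(u)\,du$. For $t\ge0$ and $c\in\mathcal{C}$, $\mathcal{T}_{t,c}$ is the branching particle system started at time $0$ by one particle with code $c$: each particle $k$, with code $c_k$ born at time $T_{k-}$, has an independent lifetime $\tau_k$ of density $\rho$. If $T_{k-}+\tau_k>t$ the particle is a leaf (set $\mathcal{K}^\partial$). Otherwise it dies at $T_k=T_{k-}+\tau_k\le t$ (set $\mathcal{K}^\circ$),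 an independent tuple $I_k$ is drawn uniformly in $\mathcal{M}(c_k)$, with probability $q_{c_k}(I_k)=1/|\mathcal{M}(c_k)|$, and the particle is replaced by $|I_k|$ offspring born at $T_k$ carrying the codes listed in $I_k$, evolving independently by the same rule. The functional is $$\mathcal{H}(\mathcal{T}_{t,c})=\prod_{k\in\mathcal{K}^\circ}\frac{1}{q_{c_k}(I_k)\,\rho(T_k-T_{k-})}\prod_{k\in\mathcal{K}^\partial}\frac{c_k(y)(0)}{\bar F(t-T_{k-})}.$$ *)

theory Defs
  imports "HOL-Analysis.Analysis" "HOL-Probability.Probability"
begin

definition partial :: "'n::finite \<Rightarrow> (real^'n \<Rightarrow> real) \<Rightarrow> real^'n \<Rightarrow> real" where
  "partial j g x = deriv (\<lambda>s. g (x + s *\<^sub>R axis j 1)) 0"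

fun Dlist :: "'n::finite list \<Rightarrow> (real^'n \<Rightarrow> real) \<Rightarrow> real^'n \<Rightarrow> real" where
  "Dlist [] g = g"
| "Dlist (j # js) g = partial j (Dlist js g)"

text \<open>Mixed partial derivative with multi-index alpha (well defined for smooth g).\<close>
definition Dmulti :: "('n::finite \<Rightarrow> nat) \<Rightarrow> (real^'n \<Rightarrow> real) \<Rightarrow> real^'n \<Rightarrow> real" where
  "Dmulti \<alpha> g = Dlist (SOME js. \<forall>j. count_list js j = \<alpha> j) g"

definition smooth_fun :: "(real^'n::finite \<Rightarrow> real) \<Rightarrow> bool" where
  "smooth_fun g \<longleftrightarrow> (\<forall>js. continuous_on UNIV (Dlist js g) \<and> (\<forall>x. Dlist js g differentiable (at x)))"

text \<open>IdC i is Id_i; DC alpha i is the formal symbol (d^alpha f_i)^*.\<close>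
datatype 'n code = IdC 'n | DC "'n \<Rightarrow> nat" 'n

text \<open>The tuple of M(c) indexed by j: for Id_i the unique tuple (f_i^*);
  for g^* = (d^alpha f_i)^* the tuple (f_j^*, (d_j g)^*).\<close>
fun offspring :: "'n code \<Rightarrow> 'n \<Rightarrow> 'n code list" where
  "offspring (IdC i) j = [DC (\<lambda>_. 0) i]"
| "offspring (DC \<alpha> i) j = [DC (\<lambda>_. 0) j, DC (\<alpha>(j := Suc (\<alpha> j))) i]"

definition mech :: "'n::finite code \<Rightarrow> 'n code list set" where
  "mech c = range (offspring c)"

text \<open>c(y)(0) as a function of f and y(0).\<close>
fun code_val :: "(real^'n::finite \<Rightarrow> real^'n) \<Rightarrow> real^'n \<Rightarrow> 'n code \<Rightarrow> real" where
  "code_val f y0 (IdC i) = y0 $ i"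
| "code_val f y0 (DC \<alpha> i) = Dmulti \<alpha> (\<lambda>x. f x $ i) y0"

definition tailF :: "(real \<Rightarrow> real) \<Rightarrow> real \<Rightarrow> real" where
  "tailF \<rho> s = (LINT u:{s..}|lborel. \<rho> u)"

text \<open>Particles are labelled by Ulam-Harris words (nat list); the root is [].
  X lab = (lifetime of particle lab, uniform index j selecting the tuple
  offspring c j of M(c)).  Hf n ... is H computed with recursion depth n
  (returns 0 if the depth is exhausted).\<close>
fun Hf :: "nat \<Rightarrow> ('n::finite code \<Rightarrow> real) \<Rightarrow> (real \<Rightarrow> real) \<Rightarrow> (nat list \<Rightarrow> 'w \<Rightarrow> real \<times> 'n)
            \<Rightarrow> real \<Rightarrow> 'n code \<Rightarrow> nat list \<Rightarrow> real \<Rightarrow> 'w \<Rightarrow> real" where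
  "Hf 0 v \<rho> X t c lab b \<omega> = 0"
| "Hf (Suc n) v \<rho> X t c lab b \<omega> =
     (let \<tau> = fst (X lab \<omega>); Z = offspring c (snd (X lab \<omega>)) in
      if t < b + \<tau> then v c / tailF \<rho> (t - b)
      else real (card (mech c)) / \<rho> \<tau> *
           (\<Prod>k<length Z. Hf n v \<rho> X t (Z ! k) (lab @ [k]) (b + \<tau>) \<omega>))"

text \<open>H(T_{t,c}): the depth-truncated values are eventually constant whenever the
  tree is finite (which holds almost surely); the value 0 is an arbitrary
  convention on the remaining event.\<close>
definition Hval :: "('n::finite code \<Rightarrow> real) \<Rightarrow> (real \<Rightarrow> real) \<Rightarrow> (nat list \<Rightarrow> 'w \<Rightarrow> real \<times> 'n)
            \<Rightarrow> real \<Rightarrow> 'n code \<Rightarrow> 'w \<Rightarrow> real" where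
  "Hval v \<rho> X t c \<omega> =
     (if convergent (\<lambda>n. Hf n v \<rho> X t c [] 0 \<omega>) then lim (\<lambda>n. Hf n v \<rho> X t c [] 0 \<omega>) else 0)"

end

theory Submission
  imports Defs
begin


fun gH :: "('n::finite code \<Rightarrow> real) \<Rightarrow> (real \<Rightarrow> real) \<Rightarrow> nat \<Rightarrow> real \<Rightarrow> 'n code \<Rightarrow> (nat list \<Rightarrow> real \<times> 'n) \<Rightarrow> real" where
  "gH v \<rho> 0 t c \<xi> = 0"
| "gH v \<rho> (Suc n) t c \<xi> = (if t < fst (\<xi> []) then v c / tailF \<rho> t
     else real (card (mech c)) / \<rho> (fst (\<xi> [])) *
       (\<Prod>k<length (offspring c (snd (\<xi> []))). gH v \<rho> n (t - fst (\<xi> [])) (offspring c (snd (\<xi> [])) ! k) (\<lambda>l. \<xi> (k#l))))"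

lemma Hf_gH: "Hf n v \<rho> X t c lab b \<omega> = gH v \<rho> n (t - b) c (\<lambda>l. X (lab@l) \<omega>)"
proof (induction n arbitrary: t c lab b)
  case 0 then show ?case by simp
next
  case (Suc n)
  show ?case
    by (simp add: Let_def Suc.IH algebra_simps cong: prod.cong)
qed

lemma gH_stable: "gH v \<rho> n t c \<xi> \<noteq> 0 \<Longrightarrow> n \<le> m \<Longrightarrow> gH v \<rho> m t c \<xi> = gH v \<rho> n t c \<xi>"
proof (induction n arbitrary: m t c \<xi>)
  case 0 then show ?case by simp
next
  case (Suc n)
  then obtain m' where m: "m = Suc m'" "n \<le> m'" by (cases m) auto
  show ?case
  proof (cases "t < fst (\<xi> [])")
    case True then show ?thesis using m by simp
  next
    case False
    with Suc.prems have nz: "\<forall>k<length (offspring c (snd (\<xi> []))). gH v \<rho> n (t - fst (\<xi> [])) (offspring c (snd (\<xi> [])) ! k) (\<lambda>l. \<xi> (k#l)) \<noteq> 0"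
      by auto
    have eq: "\<And>k. k \<in> {..<length (offspring c (snd (\<xi> [])))} \<Longrightarrow>
       gH v \<rho> m' (t - fst (\<xi> [])) (offspring c (snd (\<xi> [])) ! k) (\<lambda>l. \<xi> (k#l)) =
       gH v \<rho> n (t - fst (\<xi> [])) (offspring c (snd (\<xi> [])) ! k) (\<lambda>l. \<xi> (k#l))"
      using nz m(2) Suc.IH by blast
    show ?thesis using False m(1) by (simp only: gH.simps if_False prod.cong[OF refl eq])
  qed
qed

definition GH :: "('n::finite code \<Rightarrow> real) \<Rightarrow> (real \<Rightarrow> real) \<Rightarrow> real \<Rightarrow> 'n code \<Rightarrow> (nat list \<Rightarrow> real \<times> 'n) \<Rightarrow> real" where
  "GH v \<rho> t c \<xi> = lim (\<lambda>n. gH v \<rho> n t c \<xi>)"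

lemma gH_conv: "convergent (\<lambda>n. gH v \<rho> n t c \<xi>)"
proof (cases "\<exists>N. gH v \<rho> N t c \<xi> \<noteq> 0")
  case True
  then obtain N where N: "gH v \<rho> N t c \<xi> \<noteq> 0" by blast
  have "(\<lambda>n. gH v \<rho> n t c \<xi>) \<longlonglongrightarrow> gH v \<rho> N t c \<xi>"
  proof (rule tendsto_eventually)
    show "\<forall>\<^sub>F n in sequentially. gH v \<rho> n t c \<xi> = gH v \<rho> N t c \<xi>"
      unfolding eventually_sequentially using gH_stable[OF N] by blast
  qed
  then show ?thesis by (auto simp: convergent_def)
next
  case False then show ?thesis by (auto simp: convergent_def)
qed

lemma gH_lim: "(\<lambda>n. gH v \<rho> n t c \<xi>) \<longlonglongrightarrow> GH v \<rho> t c \<xi>"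
  using gH_conv unfolding GH_def by (simp add: convergent_LIMSEQ_iff)

lemma GH_rec: "GH v \<rho> t c \<xi> = (if t < fst (\<xi> []) then v c / tailF \<rho> t
     else real (card (mech c)) / \<rho> (fst (\<xi> [])) *
       (\<Prod>k<length (offspring c (snd (\<xi> []))). GH v \<rho> (t - fst (\<xi> [])) (offspring c (snd (\<xi> [])) ! k) (\<lambda>l. \<xi> (k#l))))"
proof -
  have 1: "(\<lambda>n. gH v \<rho> (Suc n) t c \<xi>) \<longlonglongrightarrow> GH v \<rho> t c \<xi>"
    by (rule LIMSEQ_Suc[OF gH_lim])
  have 2: "(\<lambda>n. gH v \<rho> (Suc n) t c \<xi>) \<longlonglongrightarrow> (if t < fst (\<xi> []) then v c / tailF \<rho> t
     else real (card (mech c)) / \<rho> (fst (\<xi> [])) *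
       (\<Prod>k<length (offspring c (snd (\<xi> []))). GH v \<rho> (t - fst (\<xi> [])) (offspring c (snd (\<xi> [])) ! k) (\<lambda>l. \<xi> (k#l))))"
  proof (cases "t < fst (\<xi> [])")
    case True then show ?thesis by simp
  next
    case False
    have "(\<lambda>n. real (card (mech c)) / \<rho> (fst (\<xi> [])) *
       (\<Prod>k<length (offspring c (snd (\<xi> []))). gH v \<rho> n (t - fst (\<xi> [])) (offspring c (snd (\<xi> [])) ! k) (\<lambda>l. \<xi> (k#l))))
      \<longlonglongrightarrow> real (card (mech c)) / \<rho> (fst (\<xi> [])) *
       (\<Prod>k<length (offspring c (snd (\<xi> []))). GH v \<rho> (t - fst (\<xi> [])) (offspring c (snd (\<xi> [])) ! k) (\<lambda>l. \<xi> (k#l)))"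
      by (intro tendsto_mult tendsto_const tendsto_prod gH_lim)
    then show ?thesis using False by (simp only: gH.simps if_False)
  qed
  show ?thesis using LIMSEQ_unique[OF 1 2] .
qed

lemma Hval_GH: "Hval v \<rho> X t c \<omega> = GH v \<rho> t c (\<lambda>l. X l \<omega>)"
  unfolding Hval_def GH_def Hf_gH by (simp add: gH_conv)



abbreviation "B0 \<equiv> (borel \<Otimes>\<^sub>M count_space UNIV :: (real \<times> 'n::finite) measure)"

lemma sh_meas: "(\<lambda>\<xi>. (\<lambda>l. \<xi> (k#l))) \<in> measurable (PiM UNIV (\<lambda>_::nat list. M0)) (PiM UNIV (\<lambda>_::nat list. M0))"
  by (rule measurable_PiM_single') (auto simp: space_PiM)

lemma tailF_meas: "\<rho> \<in> borel_measurable borel \<Longrightarrow> tailF \<rho> \<in> borel_measurable borel"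
proof -
  assume [measurable]: "\<rho> \<in> borel_measurable borel"
  have "tailF \<rho> = (\<lambda>s. \<integral>u. indicator {s..} u *\<^sub>R \<rho> u \<partial>lborel)"
    by (auto simp: tailF_def set_lebesgue_integral_def fun_eq_iff)
  moreover have "(\<lambda>s. \<integral>u. indicator {s..} u *\<^sub>R \<rho> u \<partial>lborel) \<in> borel_measurable borel"
  proof (rule lborel.borel_measurable_lebesgue_integral)
    have "(\<lambda>(s, u). indicator {s..} u *\<^sub>R \<rho> u) = (\<lambda>x. (if fst x \<le> snd x then 1 else 0) * \<rho> (snd x))"
      by (auto simp: fun_eq_iff indicator_def)
    moreover have "(\<lambda>x::real\<times>real. (if fst x \<le> snd x then 1 else 0) * \<rho> (snd x)) \<in> borel_measurable (borel \<Otimes>\<^sub>M lborel)"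
      by measurable
    ultimately show "(\<lambda>(s, u). indicator {s..} u *\<^sub>R \<rho> u) \<in> borel_measurable (borel \<Otimes>\<^sub>M lborel)" by simp
  qed
  ultimately show ?thesis by simp
qed

lemma gH_meas:
  fixes v :: "'n::finite code \<Rightarrow> real"
  assumes rho[measurable]: "\<rho> \<in> borel_measurable borel"
  shows "(\<lambda>(t,\<xi>). gH v \<rho> n t c \<xi>) \<in> borel_measurable (borel \<Otimes>\<^sub>M PiM UNIV (\<lambda>_::nat list. B0))"
proof (induction n arbitrary: c)
  case 0 then show ?case by simp
next
  case (Suc n)
  let ?S = "borel \<Otimes>\<^sub>M PiM UNIV (\<lambda>_::nat list. (B0::(real \<times> 'n) measure))"
  have tF[measurable]: "tailF \<rho> \<in> borel_measurable borel" using tailF_meas[OF rho] .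
  have c0[measurable]: "(\<lambda>x::real \<times> (nat list \<Rightarrow> real \<times> 'n). snd x []) \<in> measurable ?S B0"
    by measurable
  have c1[measurable]: "(\<lambda>x::real \<times> (nat list \<Rightarrow> real \<times> 'n). fst (snd x [])) \<in> borel_measurable ?S"
    by measurable
  have c2: "(\<lambda>x::real \<times> (nat list \<Rightarrow> real \<times> 'n). snd (snd x [])) \<in> measurable ?S (count_space UNIV)"
    by measurable
  have fac[measurable]: "(\<lambda>x. gH v \<rho> n (fst x - fst (snd x [])) z (\<lambda>l. snd x (k#l))) \<in> borel_measurable ?S" for z k
  proof -
    have m: "(\<lambda>x. (fst x - fst (snd x []), (\<lambda>l. snd x (k#l)))) \<in> measurable ?S ?S"
      by (intro measurable_Pair measurable_compose[OF measurable_snd sh_meas]) measurable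
    show ?thesis using measurable_compose[OF m Suc.IH[of z]] by simp
  qed
  have fj: "(\<lambda>x. if fst x < fst (snd x []) then v c / tailF \<rho> (fst x)
     else real (card (mech c)) / \<rho> (fst (snd x [])) *
       (\<Prod>k<length (offspring c j). gH v \<rho> n (fst x - fst (snd x [])) (offspring c j ! k) (\<lambda>l. snd x (k#l))))
     \<in> borel_measurable ?S" for j
    by measurable
  have "(\<lambda>x. (\<lambda>j x. if fst x < fst (snd x []) then v c / tailF \<rho> (fst x)
     else real (card (mech c)) / \<rho> (fst (snd x [])) *
       (\<Prod>k<length (offspring c j). gH v \<rho> n (fst x - fst (snd x [])) (offspring c j ! k) (\<lambda>l. snd x (k#l)))) (snd (snd x [])) x)
     \<in> borel_measurable ?S"
    by (rule measurable_compose_countable'[OF fj c2]) auto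
  then show ?case by (simp add: case_prod_beta')
qed

lemma GH_meas:
  fixes v :: "'n::finite code \<Rightarrow> real"
  assumes rho[measurable]: "\<rho> \<in> borel_measurable borel"
  shows "(\<lambda>(t,\<xi>). GH v \<rho> t c \<xi>) \<in> borel_measurable (borel \<Otimes>\<^sub>M PiM UNIV (\<lambda>_::nat list. B0))"
  by (rule borel_measurable_LIMSEQ_real[where u="\<lambda>n (t,\<xi>). gH v \<rho> n t c \<xi>"])
     (auto simp: case_prod_beta' intro: gH_lim gH_meas[OF rho, unfolded case_prod_beta'])



lemma pe_UNIV: "space M = UNIV \<Longrightarrow> prod_emb UNIV (\<lambda>_. M) J (PiE J E) = {x. \<forall>j\<in>J. x j \<in> E j}"
  by (auto simp: prod_emb_def PiE_iff extensional_def)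

lemma spPiM_UNIV: "space M = UNIV \<Longrightarrow> space (PiM UNIV (\<lambda>_. M)) = UNIV"
  by (auto simp: space_PiM PiE_iff extensional_def)

lemma mu_meas:
  fixes N :: "'a measure"
  assumes sp: "space N = UNIV"
  shows "(\<lambda>x. (\<lambda>l. case l of [] \<Rightarrow> fst x | k#l' \<Rightarrow> snd x k l')) \<in> measurable (N \<Otimes>\<^sub>M PiM UNIV (\<lambda>_::nat. PiM UNIV (\<lambda>_::nat list. N))) (PiM UNIV (\<lambda>_::nat list. N))"
proof -
  let ?P = "PiM UNIV (\<lambda>_::nat list. N)"
  let ?Q = "PiM UNIV (\<lambda>_::nat. ?P)"
  have spP: "space ?P = UNIV" by (rule spPiM_UNIV[OF sp])
  let ?mu = "\<lambda>x. (\<lambda>l. case l of [] \<Rightarrow> fst x | k#l' \<Rightarrow> snd x k l')"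
  show "?mu \<in> measurable (N \<Otimes>\<^sub>M ?Q) ?P"
  proof (rule measurable_PiM_single')
    fix l :: "nat list"
    show "(\<lambda>x. case l of [] \<Rightarrow> fst x | k#l' \<Rightarrow> snd x k l') \<in> measurable (N \<Otimes>\<^sub>M ?Q) N"
    proof (cases l)
      case (Cons k l')
      have "(\<lambda>x. snd x k l') \<in> measurable (N \<Otimes>\<^sub>M ?Q) N"
      proof (rule measurable_compose[where f="\<lambda>x. snd x k" and g="\<lambda>\<zeta>. \<zeta> l'"])
        show "(\<lambda>x. snd x k) \<in> measurable (N \<Otimes>\<^sub>M ?Q) ?P"
          by (rule measurable_compose[where f=snd and g="\<lambda>\<eta>. \<eta> k"]) (auto intro: measurable_component_singleton)
        show "(\<lambda>\<zeta>. \<zeta> l') \<in> measurable ?P N" by (rule measurable_component_singleton) simp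
      qed
      then show ?thesis using Cons by simp
    qed simp
  qed (auto simp: spP sp)
qed

lemma decomp:
  fixes N :: "'a measure"
  assumes N: "prob_space N" and sp: "space N = UNIV"
  shows "distr (N \<Otimes>\<^sub>M PiM UNIV (\<lambda>_::nat. PiM UNIV (\<lambda>_::nat list. N))) (PiM UNIV (\<lambda>_::nat list. N))
           (\<lambda>x. (\<lambda>l. case l of [] \<Rightarrow> fst x | k#l' \<Rightarrow> snd x k l')) = PiM UNIV (\<lambda>_::nat list. N)"
proof -
  interpret N: prob_space N by (rule N)
  let ?P = "PiM UNIV (\<lambda>_::nat list. N)"
  interpret PP: product_prob_space "\<lambda>_::nat list. N" UNIV by unfold_locales
  have Pprob: "prob_space ?P" by (rule prob_space_PiM) (rule N)
  interpret Pp: prob_space ?P by (rule Pprob)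
  let ?Q = "PiM UNIV (\<lambda>_::nat. ?P)"
  interpret QQ: product_prob_space "\<lambda>_::nat. ?P" UNIV by unfold_locales
  have Qprob: "prob_space ?Q" by (rule prob_space_PiM) (rule Pprob)
  interpret Qp: prob_space ?Q by (rule Qprob)
  interpret NQ: pair_sigma_finite N ?Q by unfold_locales
  have spP: "space ?P = UNIV" by (rule spPiM_UNIV[OF sp])
  have spQ: "space ?Q = UNIV" by (rule spPiM_UNIV[OF spP])
  let ?mu = "\<lambda>x. (\<lambda>l. case l of [] \<Rightarrow> fst x | k#l' \<Rightarrow> snd x k l')"
  have mu: "?mu \<in> measurable (N \<Otimes>\<^sub>M ?Q) ?P" by (rule mu_meas[OF sp])
  show ?thesis
  proof (rule PP.PiM_eq)
    show "sets (distr (N \<Otimes>\<^sub>M ?Q) ?P ?mu) = sets ?P" by simp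
  next
    fix J :: "nat list set" and F assume J: "finite J" "J \<subseteq> UNIV" and F: "\<And>j. j \<in> J \<Longrightarrow> F j \<in> sets N"
    define K where "K = hd ` (J - {[]})"
    define Jk where "Jk k = {l. k#l \<in> J}" for k
    have K: "finite K" using J by (simp add: K_def)
    have Jk: "finite (Jk k)" for k unfolding Jk_def
      using finite_vimageI[OF J(1), of "\<lambda>l. k#l"] by (simp add: vimage_def)
    define A0 where "A0 = (if [] \<in> J then F [] else space N)"
    define G where "G k = {\<zeta>::nat list \<Rightarrow> 'a. \<forall>l\<in>Jk k. \<zeta> l \<in> F (k#l)}" for k
    have Gpe: "G k = prod_emb UNIV (\<lambda>_. N) (Jk k) (PiE (Jk k) (\<lambda>l. F (k#l)))" for k
      unfolding G_def by (rule pe_UNIV[OF sp, symmetric])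
    have Gs: "G k \<in> sets ?P" for k
      unfolding Gpe using Jk F by (intro sets_PiM_I) (auto simp: Jk_def)
    have Fs: "{\<eta>. \<forall>k\<in>K. \<eta> k \<in> G k} = prod_emb UNIV (\<lambda>_. ?P) K (PiE K G)"
      by (rule pe_UNIV[OF spP, symmetric])
    have pre: "?mu -` prod_emb UNIV (\<lambda>_. N) J (PiE J F) \<inter> space (N \<Otimes>\<^sub>M ?Q) = A0 \<times> {\<eta>. \<forall>k\<in>K. \<eta> k \<in> G k}"
    proof -
      have "?mu -` prod_emb UNIV (\<lambda>_. N) J (PiE J F) \<inter> space (N \<Otimes>\<^sub>M ?Q) =
            {x. \<forall>j\<in>J. ?mu x j \<in> F j}"
        by (simp add: pe_UNIV[OF sp] space_pair_measure spQ sp)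
      also have "\<dots> = A0 \<times> {\<eta>. \<forall>k\<in>K. \<eta> k \<in> G k}"
      proof safe
        fix a \<eta> assume h: "\<forall>j\<in>J. ?mu (a,\<eta>) j \<in> F j"
        show "a \<in> A0" using h by (auto simp: A0_def sp)
        fix k assume "k \<in> K"
        show "\<eta> k \<in> G k" using h by (auto simp: G_def Jk_def)
      next
        fix a \<eta> j assume h: "a \<in> A0" "\<forall>k\<in>K. \<eta> k \<in> G k" "j \<in> J"
        show "?mu (a,\<eta>) j \<in> F j"
        proof (cases j)
          case Nil then show ?thesis using h by (auto simp: A0_def)
        next
          case (Cons k l)
          then have "k \<in> K" using h(3) by (force simp: K_def)
          then show ?thesis using h Cons by (auto simp: G_def Jk_def)
        qed
      qed
      finally show ?thesis .
    qed
    have A0s: "A0 \<in> sets N" using F by (auto simp: A0_def)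
    have "emeasure (distr (N \<Otimes>\<^sub>M ?Q) ?P ?mu) (prod_emb UNIV (\<lambda>_. N) J (PiE J F))
        = emeasure (N \<Otimes>\<^sub>M ?Q) (A0 \<times> {\<eta>. \<forall>k\<in>K. \<eta> k \<in> G k})"
      using J F by (subst emeasure_distr[OF mu]) (auto intro!: sets_PiM_I simp: pre)
    also have "\<dots> = emeasure N A0 * emeasure ?Q {\<eta>. \<forall>k\<in>K. \<eta> k \<in> G k}"
      using A0s Gs K by (intro sigma_finite_measure.emeasure_pair_measure_Times prob_space_imp_sigma_finite Qprob) (auto simp: Fs intro!: sets_PiM_I)
    also have "emeasure ?Q {\<eta>. \<forall>k\<in>K. \<eta> k \<in> G k} = (\<Prod>k\<in>K. emeasure ?P (G k))"
      unfolding Fs using K Gs by (intro QQ.emeasure_PiM_emb) auto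
    also have "\<dots> = (\<Prod>k\<in>K. \<Prod>l\<in>Jk k. emeasure N (F (k#l)))"
      unfolding Gpe using Jk F by (intro prod.cong refl PP.emeasure_PiM_emb) (auto simp: Jk_def)
    also have "\<dots> = (\<Prod>p\<in>Sigma K Jk. emeasure N (F (fst p # snd p)))"
      using K Jk by (subst prod.Sigma) (auto simp: case_prod_beta')
    also have "\<dots> = (\<Prod>j\<in>(\<lambda>p. fst p # snd p) ` Sigma K Jk. emeasure N (F j))"
      by (subst prod.reindex) (auto simp: inj_on_def)
    also have "(\<lambda>p. fst p # snd p) ` Sigma K Jk = J - {[]}"
    proof (rule set_eqI)
      fix j :: "nat list"
      show "j \<in> (\<lambda>p. fst p # snd p) ` Sigma K Jk \<longleftrightarrow> j \<in> J - {[]}"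
      proof (cases j)
        case (Cons k l)
        have "k \<in> K" if "k#l \<in> J" using that unfolding K_def by (force simp: image_iff)
        then show ?thesis using Cons by (auto simp: Jk_def image_iff)
      qed auto
    qed
    also have "emeasure N A0 * (\<Prod>j\<in>J - {[]}. emeasure N (F j)) = (\<Prod>j\<in>J. emeasure N (F j))"
      using J by (auto simp: A0_def prod.remove N.emeasure_space_1)
    finally show "emeasure (distr (N \<Otimes>\<^sub>M ?Q) ?P ?mu) (prod_emb UNIV (\<lambda>_. N) J (PiE J F)) = (\<Prod>j\<in>J. emeasure N (F j))" .
  qed
qed



lemma indep_prod_integral:
  fixes F :: "nat \<Rightarrow> 'a \<Rightarrow> real"
  assumes Pp: "prob_space P" and K: "finite K" and F: "\<And>k. k \<in> K \<Longrightarrow> integrable P (F k)"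
  shows "(\<integral>\<eta>. (\<Prod>k\<in>K. F k (\<eta> k)) \<partial>PiM UNIV (\<lambda>_::nat. P)) = (\<Prod>k\<in>K. integral\<^sup>L P (F k))"
proof -
  interpret Pp: prob_space P by (rule Pp)
  interpret PP: product_prob_space "\<lambda>_::nat. P" UNIV by unfold_locales
  have Fm[measurable]: "F k \<in> borel_measurable P" if "k \<in> K" for k using F[OF that] by auto
  have "(\<Prod>k\<in>K. integral\<^sup>L P (F k)) = (\<integral>x. (\<Prod>k\<in>K. F k (x k)) \<partial>PiM K (\<lambda>_. P))"
    using PP.product_integral_prod[of K F] K F by simp
  also have "\<dots> = (\<integral>x. (\<Prod>k\<in>K. F k (x k)) \<partial>distr (PiM UNIV (\<lambda>_. P)) (PiM K (\<lambda>_. P)) (\<lambda>x. restrict x K))"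
    using PP.distr_PiM_restrict_finite[OF K] by simp
  also have "\<dots> = (\<integral>\<eta>. (\<Prod>k\<in>K. F k (restrict \<eta> K k)) \<partial>PiM UNIV (\<lambda>_::nat. P))"
  proof (rule integral_distr)
    show "(\<lambda>x. restrict x K) \<in> measurable (PiM UNIV (\<lambda>_. P)) (PiM K (\<lambda>_. P))"
      by (rule measurable_restrict_subset) auto
    show "(\<lambda>x. \<Prod>k\<in>K. F k (x k)) \<in> borel_measurable (PiM K (\<lambda>_. P))"
    proof (rule borel_measurable_prod)
      fix k assume k: "k \<in> K"
      show "(\<lambda>x. F k (x k)) \<in> borel_measurable (PiM K (\<lambda>_. P))"
        by (rule measurable_compose[where f="\<lambda>x. x k"]) (use k Fm in \<open>auto intro: measurable_component_singleton\<close>)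
    qed
  qed
  also have "\<dots> = (\<integral>\<eta>. (\<Prod>k\<in>K. F k (\<eta> k)) \<partial>PiM UNIV (\<lambda>_::nat. P))"
  proof (rule arg_cong[where f="integral\<^sup>L _"], rule ext, rule prod.cong)
    fix \<eta> :: "nat \<Rightarrow> 'a" and k assume "k \<in> K"
    then show "F k (restrict \<eta> K k) = F k (\<eta> k)" by simp
  qed simp
  finally show ?thesis by simp
qed

locale tree =
  fixes v :: "'n::finite code \<Rightarrow> real" and \<rho> :: "real \<Rightarrow> real" and M :: "'w measure"
    and X :: "nat list \<Rightarrow> 'w \<Rightarrow> real \<times> 'n" and T K0 :: real and y :: "'n code \<Rightarrow> real \<Rightarrow> real"
  assumes rho_meas[measurable]: "\<rho> \<in> borel_measurable borel"
    and rho_pos: "\<forall>s\<ge>0. \<rho> s > 0"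
    and Mp: "prob_space M"
    and indep: "prob_space.indep_vars M (\<lambda>_. borel \<Otimes>\<^sub>M count_space UNIV) X UNIV"
    and law: "\<forall>lab. distr M (borel \<Otimes>\<^sub>M count_space UNIV) (X lab) =
               density lborel (\<lambda>s. ennreal (if 0 \<le> s then \<rho> s else 0))
                 \<Otimes>\<^sub>M measure_pmf (pmf_of_set UNIV)"
    and bound: "\<forall>c. \<forall>t\<in>{0..T}.
                 (\<integral>\<^sup>+ \<omega>. ennreal \<bar>Hval v \<rho> X t c \<omega>\<bar> \<partial>M) \<le> ennreal K0"
    and y_def: "\<forall>c t. y c t = prob_space.expectation M (Hval v \<rho> X t c)"
    and K0_pos: "K0 > 0"
begin

interpretation Mp: prob_space M by (rule Mp)

definition "D = density lborel (\<lambda>s. ennreal (if 0 \<le> s then \<rho> s else 0))"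
definition "U = measure_pmf (pmf_of_set (UNIV::'n set))"
definition "N = D \<Otimes>\<^sub>M U"
definition "P = PiM UNIV (\<lambda>_::nat list. N)"

lemma rv: "X l \<in> measurable M B0"
  using indep unfolding Mp.indep_vars_def by auto

lemma law': "distr M B0 (X l) = N"
  using law by (simp add: N_def D_def U_def)

lemma Np: "prob_space N"
  using Mp.prob_space_distr[OF rv] law' by simp

lemma sets_N: "sets N = sets B0"
  unfolding N_def D_def U_def by (intro sets_pair_measure_cong) auto

lemma space_N: "space N = UNIV"
  unfolding N_def D_def U_def by (simp add: space_pair_measure)

lemma sets_P: "sets P = sets (PiM UNIV (\<lambda>_::nat list. B0))"
  unfolding P_def by (intro sets_PiM_cong) (auto simp: sets_N)

lemma Pp: "prob_space P"
  unfolding P_def by (rule prob_space_PiM) (rule Np)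

lemma joint: "distr M (PiM UNIV (\<lambda>_::nat list. B0)) (\<lambda>\<omega> l. X l \<omega>) = P"
proof -
  have "distr M (PiM UNIV (\<lambda>_::nat list. B0)) (\<lambda>x. \<lambda>i\<in>UNIV. X i x) = (PiM UNIV (\<lambda>i. distr M B0 (X i)))"
    using Mp.indep_vars_iff_distr_eq_PiM[where I=UNIV and M'="\<lambda>_. B0" and X=X] rv indep by auto
  then show ?thesis by (simp add: law' P_def restrict_UNIV)
qed

lemma Xv_meas: "(\<lambda>\<omega> l. X l \<omega>) \<in> measurable M (PiM UNIV (\<lambda>_::nat list. B0))"
  by (rule measurable_PiM_single') (auto simp: rv space_PiM space_pair_measure)

lemma GH_meas_fix: "GH v \<rho> r c \<in> borel_measurable (PiM UNIV (\<lambda>_::nat list. B0))"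
  using measurable_Pair2[OF GH_meas[OF rho_meas, of v c], of r] by simp

lemma GH_meas_P: "GH v \<rho> r c \<in> borel_measurable P"
  using GH_meas_fix by (simp add: measurable_cong_sets[OF sets_P refl])

lemma y_eq: "y c r = (\<integral>\<xi>. GH v \<rho> r c \<xi> \<partial>P)"
proof -
  have "y c r = (\<integral>\<omega>. GH v \<rho> r c (\<lambda>l. X l \<omega>) \<partial>M)"
  proof -
    have "Hval v \<rho> X r c = (\<lambda>\<omega>. GH v \<rho> r c (\<lambda>l. X l \<omega>))" by (rule ext) (rule Hval_GH)
    then show ?thesis using y_def by simp
  qed
  also have "\<dots> = (\<integral>\<xi>. GH v \<rho> r c \<xi> \<partial>distr M (PiM UNIV (\<lambda>_::nat list. B0)) (\<lambda>\<omega> l. X l \<omega>))"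
    by (rule integral_distr[symmetric, OF Xv_meas GH_meas_fix])
  finally show ?thesis by (simp add: joint)
qed

lemma nn_bound: "r \<in> {0..T} \<Longrightarrow> (\<integral>\<^sup>+\<xi>. ennreal (norm (GH v \<rho> r c \<xi>)) \<partial>P) \<le> ennreal K0"
proof -
  assume r: "r \<in> {0..T}"
  have "(\<integral>\<^sup>+\<xi>. ennreal (norm (GH v \<rho> r c \<xi>)) \<partial>P) = (\<integral>\<^sup>+\<omega>. ennreal (norm (GH v \<rho> r c (\<lambda>l. X l \<omega>))) \<partial>M)"
    unfolding joint[symmetric] by (rule nn_integral_distr[OF Xv_meas]) (use GH_meas_fix in simp)
  also have "\<dots> = (\<integral>\<^sup>+ \<omega>. ennreal \<bar>Hval v \<rho> X r c \<omega>\<bar> \<partial>M)" by (simp add: Hval_GH)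
  also have "\<dots> \<le> ennreal K0" using bound r by auto
  finally show ?thesis .
qed

lemma GH_int: "r \<in> {0..T} \<Longrightarrow> integrable P (GH v \<rho> r c)"
proof (rule integrableI_bounded[OF GH_meas_P])
  assume r: "r \<in> {0..T}"
  show "(\<integral>\<^sup>+\<xi>. ennreal (norm (GH v \<rho> r c \<xi>)) \<partial>P) < \<infinity>"
    using nn_bound[OF r, of c] by (rule order.strict_trans1) simp
qed

lemma y_bound: "r \<in> {0..T} \<Longrightarrow> \<bar>y c r\<bar> \<le> K0"
proof -
  assume r: "r \<in> {0..T}"
  have "ennreal (norm (y c r)) \<le> (\<integral>\<^sup>+\<xi>. ennreal (norm (GH v \<rho> r c \<xi>)) \<partial>P)"
    unfolding y_eq by (rule integral_norm_bound_ennreal[OF GH_int[OF r]])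
  also have "\<dots> \<le> ennreal K0" by (rule nn_bound[OF r])
  finally have "ennreal \<bar>y c r\<bar> \<le> ennreal K0" by simp
  moreover have "K0 \<ge> 0" using K0_pos by simp
  ultimately show ?thesis by (simp add: ennreal_le_iff)
qed

lemma y_meas[measurable]: "y c \<in> borel_measurable borel"
proof -
  interpret Pp: prob_space P by (rule Pp)
  have "(\<lambda>r. \<integral>\<xi>. GH v \<rho> r c \<xi> \<partial>P) \<in> borel_measurable borel"
  proof (rule Pp.borel_measurable_lebesgue_integral)
    show "(\<lambda>(r, \<xi>). GH v \<rho> r c \<xi>) \<in> borel_measurable (borel \<Otimes>\<^sub>M P)"
      using GH_meas[OF rho_meas, of v c]
      by (simp add: measurable_cong_sets[OF sets_pair_measure_cong[OF refl sets_P] refl])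
  qed
  then show ?thesis by (simp add: y_eq[abs_def])
qed

definition "gg s = (if 0 \<le> s then \<rho> s else 0)"

lemma gg_meas[measurable]: "gg \<in> borel_measurable borel"
  unfolding gg_def by measurable

lemma gg_nonneg: "0 \<le> gg s"
  using rho_pos by (auto simp: gg_def less_imp_le)

lemma D_gg: "D = density lborel (\<lambda>s. ennreal (gg s))"
  by (simp add: D_def gg_def)

lemma Up: "prob_space U"
  unfolding U_def by (rule prob_space_measure_pmf)

lemma space_D: "space D = UNIV" by (simp add: D_def)
lemma sets_D: "sets D = sets borel" by (simp add: D_def)

lemma Dp: "prob_space D"
proof (rule prob_spaceI)
  interpret Np: prob_space N by (rule Np)
  have sfU: "sigma_finite_measure U" by (rule prob_space_imp_sigma_finite[OF Up])
  have "1 = emeasure N (space N)" by (simp add: Np.emeasure_space_1)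
  also have "space N = UNIV \<times> UNIV" by (simp add: space_N)
  also have "emeasure N (UNIV \<times> UNIV) = emeasure D UNIV * emeasure U UNIV"
    unfolding N_def by (rule sigma_finite_measure.emeasure_pair_measure_Times[OF sfU]) (auto simp: sets_D U_def)
  also have "emeasure U UNIV = 1"
    using prob_space.emeasure_space_1[OF Up] by (simp add: U_def)
  finally show "emeasure D (space D) = 1" by (simp add: space_D)
qed

lemma AE_nonneg: "AE a in N. 0 \<le> fst a"
proof (rule AE_I')
  have sfU: "sigma_finite_measure U" by (rule prob_space_imp_sigma_finite[OF Up])
  have "emeasure D {..<0} = (\<integral>\<^sup>+ x. ennreal (gg x) * indicator {..<0} x \<partial>lborel)"
    unfolding D_gg by (rule emeasure_density) auto
  also have "(\<lambda>x. ennreal (gg x) * indicator {..<0} x) = (\<lambda>x. 0)"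
    by (rule ext) (auto simp: gg_def split: split_indicator)
  finally have D0: "emeasure D {..<0} = 0" by simp
  have "emeasure N ({..<0} \<times> UNIV) = emeasure D {..<0} * emeasure U UNIV"
    unfolding N_def by (rule sigma_finite_measure.emeasure_pair_measure_Times[OF sfU]) (auto simp: sets_D U_def)
  then have "emeasure N ({..<0} \<times> UNIV) = 0" by (simp add: D0)
  moreover have "{..<0::real} \<times> (UNIV::'n set) \<in> sets N"
    unfolding sets_N by auto
  ultimately show "{..<0::real} \<times> (UNIV::'n set) \<in> null_sets N" by auto
qed (auto simp: space_N)

lemma tail_eq: "0 \<le> t \<Longrightarrow> measure D {t<..} = tailF \<rho> t"
proof -
  assume t: "0 \<le> t"
  have "measure D {t<..} = (\<integral>s. indicator {t<..} s \<partial>D)"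
    by (simp add: space_D)
  also have "\<dots> = (\<integral>s. gg s *\<^sub>R indicator {t<..} s \<partial>lborel)"
    unfolding D_gg by (rule integral_density) (auto simp: gg_nonneg)
  also have "\<dots> = (\<integral>s. indicator {t..} s *\<^sub>R \<rho> s \<partial>lborel)"
  proof (rule integral_cong_AE)
    show "AE s in lborel. gg s *\<^sub>R indicator {t<..} s = indicator {t..} s *\<^sub>R \<rho> s"
      using AE_lborel_singleton[of t] by eventually_elim (use t in \<open>auto simp: gg_def indicator_def\<close>)
  qed auto
  also have "\<dots> = tailF \<rho> t" by (simp add: tailF_def set_lebesgue_integral_def)
  finally show ?thesis .
qed

lemma tail_pos: "0 \<le> t \<Longrightarrow> tailF \<rho> t > 0"
proof -
  assume t: "0 \<le> t"
  interpret Dp: prob_space D by (rule Dp)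
  have em: "emeasure D {t<..} = (\<integral>\<^sup>+ x. ennreal (gg x) * indicator {t<..} x \<partial>lborel)"
    unfolding D_gg by (rule emeasure_density) auto
  have "emeasure D {t<..} \<noteq> 0"
  proof
    assume "emeasure D {t<..} = 0"
    then have "AE x in lborel. ennreal (gg x) * indicator {t<..} x = 0"
      unfolding em by (subst (asm) nn_integral_0_iff_AE) auto
    then have "AE x in lborel. x \<notin> {t<..<t+1}"
      by eventually_elim (use t rho_pos in \<open>auto simp: gg_def indicator_def split: if_splits\<close>)
    then have "emeasure lborel {t<..<t+1} = 0"
      by (subst (asm) AE_iff_measurable[of "{t<..<t+1}"]) auto
    then show False by simp
  qed
  then have "measure D {t<..} \<noteq> 0"
    by (simp add: Dp.emeasure_eq_measure)
  then show ?thesis using tail_eq[OF t] by (metis measure_nonneg order_le_less)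
qed

definition "Pj c j r = (\<Prod>k<length (offspring c j). y (offspring c j ! k) r)"
definition "hh c t a = (if t < fst a then v c / tailF \<rho> t
    else real (card (mech c)) / \<rho> (fst a) * Pj c (snd a) (t - fst a))"

lemma Pj_meas[measurable]: "Pj c j \<in> borel_measurable borel"
  unfolding Pj_def by (rule borel_measurable_prod) simp

lemma hh_meas: "hh c t \<in> borel_measurable N"
proof -
  have fj: "(\<lambda>a. if t < fst a then v c / tailF \<rho> t
    else real (card (mech c)) / \<rho> (fst a) * Pj c j (t - fst a)) \<in> borel_measurable N" for j
    unfolding measurable_cong_sets[OF sets_N refl] by measurable
  have g: "snd \<in> measurable N (count_space (UNIV::'n set))"
    unfolding measurable_cong_sets[OF sets_N refl] by measurable
  have "(\<lambda>a. (\<lambda>j a. if t < fst a then v c / tailF \<rho> t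
    else real (card (mech c)) / \<rho> (fst a) * Pj c j (t - fst a)) (snd a) a) \<in> borel_measurable N"
    by (rule measurable_compose_countable'[OF fj g]) auto
  then show ?thesis by (simp add: hh_def[abs_def])
qed

abbreviation "Q \<equiv> PiM UNIV (\<lambda>_::nat. P)"
abbreviation "mu \<equiv> (\<lambda>x. (\<lambda>l. case l of [] \<Rightarrow> fst x | k#l' \<Rightarrow> snd x k l'))"

lemma inner:
  assumes t: "t \<in> {0..T}" and a: "0 \<le> fst a"
  shows "(\<integral>\<eta>. GH v \<rho> t c (mu (a,\<eta>)) \<partial>Q) = hh c t a"
proof -
  interpret Pp: prob_space P by (rule Pp)
  have Qp: "prob_space Q" by (rule prob_space_PiM) (rule Pp)
  interpret Qp: prob_space Q by (rule Qp)
  have sh: "(\<lambda>l. mu (a,\<eta>) (k#l)) = \<eta> k" for \<eta> k by (rule ext) simp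
  have rec: "GH v \<rho> t c (mu (a,\<eta>)) = (if t < fst a then v c / tailF \<rho> t
     else real (card (mech c)) / \<rho> (fst a) *
       (\<Prod>k<length (offspring c (snd a)). GH v \<rho> (t - fst a) (offspring c (snd a) ! k) (\<eta> k)))" for \<eta>
    by (subst GH_rec) (simp add: sh)
  show ?thesis
  proof (cases "t < fst a")
    case True
    have "(\<lambda>\<eta>. GH v \<rho> t c (mu (a,\<eta>))) = (\<lambda>\<eta>. v c / tailF \<rho> t)"
      using True by (intro ext) (simp only: rec if_True)
    then show ?thesis using True by (simp add: hh_def Qp.prob_space)
  next
    case False
    have int: "integrable P (GH v \<rho> (t - fst a) z)" for z
      using t a False by (intro GH_int) auto
    have "(\<integral>\<eta>. GH v \<rho> t c (mu (a,\<eta>)) \<partial>Q) = real (card (mech c)) / \<rho> (fst a) *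
       (\<integral>\<eta>. (\<Prod>k<length (offspring c (snd a)). GH v \<rho> (t - fst a) (offspring c (snd a) ! k) (\<eta> k)) \<partial>Q)"
    proof -
      have "(\<lambda>\<eta>. GH v \<rho> t c (mu (a,\<eta>))) = (\<lambda>\<eta>. real (card (mech c)) / \<rho> (fst a) *
       (\<Prod>k<length (offspring c (snd a)). GH v \<rho> (t - fst a) (offspring c (snd a) ! k) (\<eta> k)))"
        using False by (intro ext) (simp only: rec if_False)
      then show ?thesis by (simp only: integral_mult_right_zero)
    qed
    also have "(\<integral>\<eta>. (\<Prod>k<length (offspring c (snd a)). GH v \<rho> (t - fst a) (offspring c (snd a) ! k) (\<eta> k)) \<partial>Q)
       = (\<Prod>k<length (offspring c (snd a)). (\<integral>\<xi>. GH v \<rho> (t - fst a) (offspring c (snd a) ! k) \<xi> \<partial>P))"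
      by (rule indep_prod_integral[OF Pp]) (auto intro: int)
    also have "\<dots> = Pj c (snd a) (t - fst a)"
      by (simp add: Pj_def y_eq)
    finally show ?thesis using False by (simp add: hh_def)
  qed
qed

lemma y_N:
  assumes t: "t \<in> {0..T}"
  shows "y c t = (\<integral>a. hh c t a \<partial>N)" "integrable N (hh c t)"
proof -
  interpret Pp: prob_space P by (rule Pp)
  have Qp: "prob_space Q" by (rule prob_space_PiM) (rule Pp)
  interpret Qp: prob_space Q by (rule Qp)
  interpret Np: prob_space N by (rule Np)
  interpret NQ: pair_sigma_finite N Q by unfold_locales
  have dec: "distr (N \<Otimes>\<^sub>M Q) P mu = P"
    using decomp[OF Np space_N] by (simp add: P_def)
  have mum: "mu \<in> measurable (N \<Otimes>\<^sub>M Q) P"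
    using mu_meas[OF space_N] by (simp add: P_def)
  have GHm: "GH v \<rho> t c \<in> borel_measurable P" by (rule GH_meas_P)
  have "y c t = (\<integral>\<xi>. GH v \<rho> t c \<xi> \<partial>distr (N \<Otimes>\<^sub>M Q) P mu)" by (simp add: dec y_eq)
  also have "\<dots> = (\<integral>x. GH v \<rho> t c (mu x) \<partial>(N \<Otimes>\<^sub>M Q))"
    by (rule integral_distr[OF mum GHm])
  finally have y1: "y c t = (\<integral>x. GH v \<rho> t c (mu x) \<partial>(N \<Otimes>\<^sub>M Q))" .
  have intNQ: "integrable (N \<Otimes>\<^sub>M Q) (\<lambda>x. GH v \<rho> t c (mu x))"
  proof -
    have "integrable (distr (N \<Otimes>\<^sub>M Q) P mu) (GH v \<rho> t c)" using GH_int[OF t, of c] by (simp only: dec)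
    then show ?thesis by (rule iffD1[OF integrable_distr_eq[OF mum GHm]])
  qed
  have fub: "(\<integral>a. (\<integral>\<eta>. GH v \<rho> t c (mu (a,\<eta>)) \<partial>Q) \<partial>N) = (\<integral>x. GH v \<rho> t c (mu x) \<partial>(N \<Otimes>\<^sub>M Q))"
    by (rule NQ.integral_fst'[OF intNQ])
  have intin: "integrable N (\<lambda>a. \<integral>\<eta>. GH v \<rho> t c (mu (a,\<eta>)) \<partial>Q)"
    by (rule NQ.integrable_fst'[OF intNQ])
  have ae: "AE a in N. (\<integral>\<eta>. GH v \<rho> t c (mu (a,\<eta>)) \<partial>Q) = hh c t a"
    using AE_nonneg by eventually_elim (rule inner[OF t])
  have inm: "(\<lambda>a. \<integral>\<eta>. GH v \<rho> t c (mu (a,\<eta>)) \<partial>Q) \<in> borel_measurable N"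
    using intin by (rule borel_measurable_integrable)
  show "integrable N (hh c t)"
    using intin integrable_cong_AE[OF inm hh_meas ae] by simp
  show "y c t = (\<integral>a. hh c t a \<partial>N)"
    unfolding y1 fub[symmetric] by (rule integral_cong_AE[OF inm hh_meas ae])
qed

lemma Pj_bound: "r \<in> {0..T} \<Longrightarrow> \<bar>Pj c j r\<bar> \<le> K0 ^ length (offspring c j)"
proof -
  assume r: "r \<in> {0..T}"
  have "\<bar>Pj c j r\<bar> = (\<Prod>k<length (offspring c j). \<bar>y (offspring c j ! k) r\<bar>)"
    by (simp add: Pj_def abs_prod)
  also have "\<dots> \<le> (\<Prod>k<length (offspring c j). K0)"
    by (rule prod_mono) (use y_bound[OF r] in auto)
  finally show ?thesis by simp
qed

lemma refl_int: "(\<integral>s. indicator {0..t} s *\<^sub>R f (t - s) \<partial>lborel) = (\<integral>s. indicator {0..t} s *\<^sub>R f s \<partial>lborel)"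
  for f :: "real \<Rightarrow> real"
proof -
  have "(\<integral>s. indicator {0..t} s *\<^sub>R f s \<partial>lborel) = \<bar>-1::real\<bar> *\<^sub>R (\<integral>x. indicator {0..t} (t + -1 * x) *\<^sub>R f (t + -1 * x) \<partial>lborel)"
    by (rule lborel_integral_real_affine) simp
  also have "(\<lambda>x. indicator {0..t} (t + -1 * x) *\<^sub>R f (t + -1 * x)) = (\<lambda>s. indicator {0..t} s *\<^sub>R f (t - s))"
    by (rule ext) (auto simp: indicator_def)
  finally show ?thesis by simp
qed

lemma Pj_int:
  assumes t: "t \<in> {0..T}"
  shows "integrable lborel (\<lambda>s. indicator {0..t} s *\<^sub>R Pj c j s)"
    and "integrable lborel (\<lambda>s. indicator {0..t} s *\<^sub>R Pj c j (t - s))"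
proof -
  show "integrable lborel (\<lambda>s. indicator {0..t} s *\<^sub>R Pj c j s)"
    by (rule integrableI_bounded_set_indicator[where B="K0 ^ length (offspring c j)"])
       (use t Pj_bound in auto)
  show "integrable lborel (\<lambda>s. indicator {0..t} s *\<^sub>R Pj c j (t - s))"
    by (rule integrableI_bounded_set_indicator[where B="K0 ^ length (offspring c j)"])
       (use t Pj_bound in auto)
qed

lemma y_final:
  assumes t: "t \<in> {0..T}"
  shows "y c t = v c + real (card (mech c)) / real CARD('n) * (\<Sum>j\<in>UNIV. (\<integral>s. indicator {0..t} s *\<^sub>R Pj c j s \<partial>lborel))"
proof -
  interpret Dp: prob_space D by (rule Dp)
  interpret Up: prob_space U by (rule Up)
  interpret DU: pair_sigma_finite D U by unfold_locales
  have t0: "0 \<le> t" using t by simp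
  let ?C = "real CARD('n)"
  let ?c = "real (card (mech c))"
  define G where "G s = (\<Sum>j\<in>UNIV. hh c t (s,j)) / ?C" for s
  have intDU: "integrable (D \<Otimes>\<^sub>M U) (hh c t)" using y_N(2)[OF t, of c] by (simp add: N_def)
  have inU: "(\<integral>j. hh c t (s,j) \<partial>U) = G s" for s
    by (simp add: U_def integral_pmf_of_set G_def)
  have y1: "y c t = (\<integral>s. G s \<partial>D)"
    using y_N(1)[OF t, of c] DU.integral_fst'[OF intDU] by (simp add: N_def inU)
  have intG: "integrable D G"
    using DU.integrable_fst'[OF intDU] by (simp add: inU)
  have Gm: "G \<in> borel_measurable borel"
    using borel_measurable_integrable[OF intG] by (simp add: measurable_cong_sets[OF sets_D refl])
  have y2: "y c t = (\<integral>s. gg s *\<^sub>R G s \<partial>lborel)"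
    unfolding y1 D_gg by (rule integral_density) (use Gm gg_nonneg in auto)
  define A where "A s = indicator {t<..} s *\<^sub>R gg s * (v c / tailF \<rho> t)" for s
  define B where "B s = ?c / ?C * (\<Sum>j\<in>UNIV. indicator {0..t} s *\<^sub>R Pj c j (t - s))" for s
  have pw: "gg s *\<^sub>R G s = A s + B s" for s
  proof (cases "t < s")
    case True
    then show ?thesis by (simp add: A_def B_def G_def hh_def indicator_def)
  next
    case False
    show ?thesis
    proof (cases "0 \<le> s")
      case True
      have rp: "\<rho> s > 0" using rho_pos True by auto
      have "G s = ?c / \<rho> s * (\<Sum>j\<in>UNIV. Pj c j (t - s)) / ?C"
        using False by (simp add: G_def hh_def sum_distrib_left)
      then show ?thesis using False True rp
        by (simp add: A_def B_def gg_def indicator_def sum_distrib_left sum_divide_distrib)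
    next
      case False2: False
      then show ?thesis using False by (simp add: A_def B_def gg_def indicator_def)
    qed
  qed
  have ggint: "integrable lborel gg"
  proof -
    have "integrable D (\<lambda>_. 1::real)" by simp
    then show ?thesis unfolding D_gg by (subst (asm) integrable_density) (auto simp: gg_nonneg)
  qed
  have intA: "integrable lborel A"
    unfolding A_def by (intro integrable_mult_left integrable_mult_indicator ggint) auto
  have intB: "integrable lborel B"
  proof -
    have "integrable lborel (\<lambda>s. \<Sum>j\<in>UNIV. indicator {0..t} s *\<^sub>R Pj c j (t - s))"
      by (rule Bochner_Integration.integrable_sum) (rule Pj_int(2)[OF t])
    then show ?thesis unfolding B_def by (intro integrable_mult_right)
  qed
  have "y c t = (\<integral>s. A s \<partial>lborel) + (\<integral>s. B s \<partial>lborel)"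
    unfolding y2 pw by (rule Bochner_Integration.integral_add[OF intA intB])
  also have "(\<integral>s. A s \<partial>lborel) = v c"
  proof -
    have "(\<integral>s. gg s *\<^sub>R (indicator {t<..} s::real) \<partial>lborel) = (\<integral>s. indicator {t<..} s \<partial>D)"
      unfolding D_gg by (subst integral_density) (auto simp: gg_nonneg)
    also have "\<dots> = tailF \<rho> t" using tail_eq[OF t0] by (simp add: space_D)
    finally have "(\<integral>s. (indicator {t<..} s::real) *\<^sub>R gg s \<partial>lborel) = tailF \<rho> t" by (simp add: mult.commute)
    then have "(\<integral>s. A s \<partial>lborel) = tailF \<rho> t * (v c / tailF \<rho> t)"
      unfolding A_def by simp
    then show ?thesis using tail_pos[OF t0] by simp
  qed
  also have "(\<integral>s. B s \<partial>lborel) = ?c / ?C * (\<Sum>j\<in>UNIV. (\<integral>s. indicator {0..t} s *\<^sub>R Pj c j (t - s) \<partial>lborel))"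
    unfolding B_def
    by (subst integral_mult_right_zero, subst Bochner_Integration.integral_sum) (use Pj_int(2)[OF t] in auto)
  also have "(\<Sum>j\<in>UNIV. (\<integral>s. indicator {0..t} s *\<^sub>R Pj c j (t - s) \<partial>lborel)) = (\<Sum>j\<in>UNIV. (\<integral>s. indicator {0..t} s *\<^sub>R Pj c j s \<partial>lborel))"
    by (rule sum.cong[OF refl]) (rule refl_int)
  finally show ?thesis .
qed

lemma prodlist_Pj: "(\<Prod>z\<leftarrow>offspring c j. y z s) = Pj c j s"
  by (cases c) (simp_all add: Pj_def lessThan_Suc numeral_2_eq_2)

lemma final:
  assumes t: "t \<in> {0..T}"
  shows "(\<forall>Z\<in>mech c. (\<lambda>s. \<Prod>z\<leftarrow>Z. y z s) integrable_on {0..t}) \<and>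
           y c t = v c + (\<Sum>Z\<in>mech c. integral {0..t} (\<lambda>s. \<Prod>z\<leftarrow>Z. y z s))"
proof -
  have si: "set_integrable lborel {0..t} (Pj c j)" for j
    unfolding set_integrable_def by (rule Pj_int(1)[OF t])
  have hk: "Pj c j integrable_on {0..t}" for j
    using set_borel_integral_eq_integral(1)[OF si] .
  have Ij: "(\<integral>s. indicator {0..t} s *\<^sub>R Pj c j s \<partial>lborel) = integral {0..t} (\<lambda>s. \<Prod>z\<leftarrow>offspring c j. y z s)" for j
    using set_borel_integral_eq_integral(2)[OF si[of j]]
    by (simp add: set_lebesgue_integral_def prodlist_Pj)
  have part1: "\<forall>Z\<in>mech c. (\<lambda>s. \<Prod>z\<leftarrow>Z. y z s) integrable_on {0..t}"
    using hk by (auto simp: mech_def prodlist_Pj)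
  define IZ where "IZ Z = integral {0..t} (\<lambda>s. \<Prod>z\<leftarrow>Z. y z s)" for Z
  have "y c t = v c + real (card (mech c)) / real CARD('n) * (\<Sum>j\<in>UNIV. IZ (offspring c j))"
    using y_final[OF t, of c, unfolded Ij] unfolding IZ_def .
  also have "real (card (mech c)) / real CARD('n) * (\<Sum>j\<in>UNIV. IZ (offspring c j)) = (\<Sum>Z\<in>mech c. IZ Z)"
  proof (cases c)
    case (IdC i)
    have m: "mech c = {[DC (\<lambda>_. 0) i]}" unfolding mech_def IdC by auto
    have o: "offspring c j = [DC (\<lambda>_. 0) i]" for j unfolding IdC by simp
    have C0: "real CARD('n) \<noteq> 0" by simp
    show ?thesis unfolding m o using C0 by simp
  next
    case (DC \<alpha> i)
    have inj: "inj (offspring c)" by (rule injI) (simp add: DC)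
    have cm: "card (mech c) = CARD('n)" unfolding mech_def using inj by (simp add: card_image)
    have "(\<Sum>Z\<in>mech c. IZ Z) = (\<Sum>j\<in>UNIV. IZ (offspring c j))"
      unfolding mech_def by (subst sum.reindex[OF inj]) simp
    then show ?thesis by (simp add: cm)
  qed
  finally show ?thesis using part1 by (simp add: IZ_def)
qed

end

theorem mainTheorem3:
  fixes f :: "real^'n::finite \<Rightarrow> real^'n"
    and y0 :: "real^'n"
    and \<rho> :: "real \<Rightarrow> real"
    and M :: "'w measure"
    and X :: "nat list \<Rightarrow> 'w \<Rightarrow> real \<times> 'n"
    and T K0 :: real
    and y :: "'n code \<Rightarrow> real \<Rightarrow> real"
  assumes smooth: "\<forall>i. smooth_fun (\<lambda>x. f x $ i)"
    and lipschitz: "\<forall>i. \<exists>L. L-lipschitz_on UNIV (\<lambda>x. f x $ i)"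
    and rho_meas: "\<rho> \<in> borel_measurable borel"
    and rho_pos: "\<forall>s\<ge>0. \<rho> s > 0"
    and P: "prob_space M"
    and indep: "prob_space.indep_vars M (\<lambda>_. borel \<Otimes>\<^sub>M count_space UNIV) X UNIV"
    and law: "\<forall>lab. distr M (borel \<Otimes>\<^sub>M count_space UNIV) (X lab) =
               density lborel (\<lambda>s. ennreal (if 0 \<le> s then \<rho> s else 0))
                 \<Otimes>\<^sub>M measure_pmf (pmf_of_set UNIV)"
    and T_pos: "T > 0"
    and K0_pos: "K0 > 0"
    and bound: "\<forall>c. \<forall>t\<in>{0..T}.
                 (\<integral>\<^sup>+ \<omega>. ennreal \<bar>Hval (code_val f y0) \<rho> X t c \<omega>\<bar> \<partial>M) \<le> ennreal K0"
    and y_def: "\<forall>c t. y c t = prob_space.expectation M (Hval (code_val f y0) \<rho> X t c)"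
  shows "\<forall>c. \<forall>t\<in>{0..T}.
           (\<forall>Z\<in>mech c. (\<lambda>s. \<Prod>z\<leftarrow>Z. y z s) integrable_on {0..t}) \<and>
           y c t = code_val f y0 c + (\<Sum>Z\<in>mech c. integral {0..t} (\<lambda>s. \<Prod>z\<leftarrow>Z. y z s))"
proof (intro allI ballI)
  fix c t assume t: "t \<in> {0..T}"
  interpret tree "code_val f y0" \<rho> M X T K0 y
    by (rule tree.intro[OF rho_meas rho_pos P indep law bound y_def K0_pos])
  show "(\<forall>Z\<in>mech c. (\<lambda>s. \<Prod>z\<leftarrow>Z. y z s) integrable_on {0..t}) \<and>
           y c t = code_val f y0 c + (\<Sum>Z\<in>mech c. integral {0..t} (\<lambda>s. \<Prod>z\<leftarrow>Z. y z s))"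
    by (rule final[OF t])
qed

end
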